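(* Let $V$ be a family of representations of $\mathcal G_K$ over $S$, $r\ge r_0$, and write $\mathbf D^r=\mathbf D^r_L$, $\mathbf D^{pr}=\mathbf D^{pr}_L$. Let $M_0=(\mathbf D^r)^{\varphi=1}=\{z\in\mathbf D^r:\varphi(z)=z\}$ and $N=\mathbf D^{pr}/(\varphi-1)\mathbf D^r$ (both $G_\infty$-modules). For a $G_\infty$-module $M$ let $f_M(m)=((\gamma-1)m,(\tau-1)m)$ and $g_M(a,b)=(\tau-1)a+(1-\delta^{-1}\gamma)b$. Let $d_0,d_1,d_2$ be the maps $d_0(a)=((\varphi-1)a,(\gamma-1)a,(\tau-1)a)$ on $\mathbf D^r$, $d_1(a,b,c)=((\gamma-1)a+(1-\varphi)b,(\tau-1)a+(1-\varphi)c,(\tau-1)b+(1-\delta^{-1}\gamma)c)$ on $\mathbf D^{pr}\oplus\mathbf D^r\oplus\mathbf D^r$, and $d_2(a,b,c)=(\tau-1)a+(1-\delta^{-1}\gamma)b+(\varphi-1)c$ on $\mathbf D^{pr}\oplus\mathbf D^{pr}\oplus\mathbf D^r$. Then the sequence $$0\to\frac{\ker g_{M_0}}{\mathrm{im}\,f_{M_0}}\xrightarrow{\delta_1}\frac{\ker d_1}{\mathrm{im}\,d_0}\xrightarrow{\delta_2}N^{\tau=1,\gamma=1}\xrightarrow{\delta_3}\frac{M_0}{(\tau-1)M_0+(1-\delta^{-1}\gamma)M_0}\xrightarrow{\delta_4}\frac{\ker d_2}{\mathrm{im}\,d_1}\xrightarrow{\delta_5}\frac{\ker g_N}{\mathrm{im}\,f_N}\to0$$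 is well defined and exact, where $\delta_1(y,z)=(0,y,z)$, $\delta_2(x,y,z)=x$, $\delta_3(x)=(\tau-1)y_x+(1-\delta^{-1}\gamma)z_x$ for any $y_x,z_x\in\mathbf D^r$ with $(\gamma-1)x=(\varphi-1)y_x$ and $(\tau-1)x=(\varphi-1)z_x$, $\delta_4(z)=(0,0,z)$, and $\delta_5(x,y,z)=(x,y)$ (all on classes).
   Context: Let $p$ be an odd prime, $K/\mathbf Q_p$ finite with uniformizer $\pi$ and residue field $k$; $\overline K$, $\mathbf C_p$, $\mathcal O_{\mathbf C_p}$, tilt $\mathbf C_p^\flat$ with $v^\flat(x)=v_p(x^\sharp)$. Fix $\pi_0=\pi$, $\pi_{n+1}^p=\pi_n$ and compatible primitive $p^n$-th roots of unity $\epsilon_n$; $K_\infty=\bigcup K(\pi_n)$, $K_{\mathrm{cycl}}=\bigcup K(\epsilon_n)$, $L=K_\infty K_{\mathrm{cycl}}$, $\mathcal G_K=\mathrm{Gal}(\overline K/K)$, $H_\infty=\mathrm{Gal}(\overline K/L)$, $G_\infty=\mathrm{Gal}(L/K)$, $H_{\tau,K}=\mathrm{Gal}(\overline K/K_\infty)$, $\chi$ cyclotomic character, $c(g)\in\mathbf Z_p$ given by $g(\pi_n)=\epsilon_n^{c(g)}\pi_n$. $\gamma$ is a topological generator of $\mathrm{Gal}(L/K_\infty)$, $\tau\in\mathrm{Gal}(L/K_{\mathrm{cycl}})$ with $c(\tau)=1$; $g\tau g^{-1}=\tau^{\chi(g)}$ for $g\in\mathrm{Gal}(L/K_\infty)$.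 $\delta=\frac{\tau^{\chi(\gamma)}-1}{\tau-1}$ is the limit of $1+\tau+\dots+\tau^{\chi_n-1}$, $\chi_n\in\mathbf Z_{>0}$, $\chi_n\to\chi(\gamma)$; it is invertible. Rings: $\tilde{\mathbf A}=W(\mathbf C_p^\flat)$, $\tilde{\mathbf B}=\tilde{\mathbf A}[1/p]$ with Frobenius $\varphi$, $\mathcal G_K$-action; $\tilde{\mathbf B}^{\dagger,r}=\{\sum_{n\gg-\infty}p^n[x_n]: v^\flat(x_n)+\frac{pr}{p-1}n\to\infty\}$; $\mathbf A_{\tau,K}$ the $p$-adic completion of $W(k)[[u]][1/u]$ embedded via $u\mapsto[(\pi_n)_n]$, $\mathbf B_{\tau,K}=\mathbf A_{\tau,K}[1/p]$, $\mathbf B^{\dagger,r}_{\tau,K}=\mathbf B_{\tau,K}\cap\tilde{\mathbf B}^{\dagger,r}$, $\tilde{\mathbf B}^{\dagger,r}_L=(\tilde{\mathbf B}^{\dagger,r})^{H_\infty}$. $S$ is a $\mathbf Q_p$-Banach algebra whose residue fields at maximal ideals are finite over $\mathbf Q_p$; $\hat\otimes$ is over $\mathbf Q_p$. A family of representations is a free $S$-module $V$ of finite rank with continuous $S$-linear $\mathcal G_K$-action. There exist $r_0>0$ and, for $r\ge r_0$, compatible locally free $S\hat\otimes\mathbf B^{\dagger,r}_{\tau,K}$-modules $D^{\dagger,r}_{\tau,K}(V)$ inside $((S\hat\otimes\tilde{\mathbf B}^{\dagger,r})\otimes_SV)^{H_{\tau,K}}$, with $\varphi\otimes 1$ mapping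 level $r$ into level $pr$, and $(S\hat\otimes\tilde{\mathbf B}^{\dagger,r})\otimes D^{\dagger,r}_{\tau,K}(V)\cong(S\hat\otimes\tilde{\mathbf B}^{\dagger,r})\otimes_SV$. $\mathbf D^r_L=(S\hat\otimes\tilde{\mathbf B}^{\dagger,r}_L)\otimes_{S\hat\otimes\mathbf B^{\dagger,r}_{\tau,K}}D^{\dagger,r}_{\tau,K}(V)$ is, via this isomorphism, an $H_\infty$-fixed $\mathcal G_K$-stable submodule of $(S\hat\otimes\tilde{\mathbf B}^{\dagger,r})\otimes_SV$, hence a $G_\infty$-module, and $\varphi=\varphi\otimes1:\mathbf D^r_L\to\mathbf D^{pr}_L$ commutes with $G_\infty$. *)

theory Defs
  imports Main "HOL-Library.Product_Plus"
begin

text \<open>All modules live in one ambient abelian group 'm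
  (in the paper: (S \<hat>\<otimes> B~dagger) \<otimes>_S V).  Dr, Dpr are the subgroups D^r_L \<subseteq> D^{pr}_L;
  gam, tau, dlt, dinv are the actions of gamma, tau, delta, delta^{-1}; phi is Frobenius.
  Subquotients Z/B are represented by pairs of sets (cycles Z, boundaries B);
  maps between subquotients are given on representatives by relations.\<close>

definition subgrp :: "'a::ab_group_add set \<Rightarrow> bool" where
  "subgrp A \<longleftrightarrow> 0 \<in> A \<and> (\<forall>x\<in>A. \<forall>y\<in>A. x + y \<in> A \<and> - x \<in> A)"

definition subquot :: "'a::ab_group_add set \<Rightarrow> 'a set \<Rightarrow> bool" where
  "subquot Z B \<longleftrightarrow> subgrp Z \<and> subgrp B \<and> B \<subseteq> Z"

definition wd_map :: "'a::ab_group_add set \<Rightarrow> 'a set \<Rightarrow> 'b::ab_group_add set \<Rightarrow> 'b set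
    \<Rightarrow> ('a \<Rightarrow> 'b \<Rightarrow> bool) \<Rightarrow> bool" where
  "wd_map Z1 B1 Z2 B2 R \<longleftrightarrow> subquot Z1 B1 \<and> subquot Z2 B2
     \<and> (\<forall>x\<in>Z1. \<exists>y. R x y)
     \<and> (\<forall>x\<in>Z1. \<forall>y. R x y \<longrightarrow> y \<in> Z2)
     \<and> (\<forall>x\<in>Z1. \<forall>x'\<in>Z1. \<forall>y y'. R x y \<and> R x' y' \<and> x - x' \<in> B1 \<longrightarrow> y - y' \<in> B2)
     \<and> (\<forall>x\<in>Z1. \<forall>x'\<in>Z1. \<forall>y y'. R x y \<and> R x' y' \<longrightarrow> R (x + x') (y + y'))"

definition inj_cls :: "'a::ab_group_add set \<Rightarrow> 'a set \<Rightarrow> 'b::ab_group_add set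
    \<Rightarrow> ('a \<Rightarrow> 'b \<Rightarrow> bool) \<Rightarrow> bool" where
  "inj_cls Z1 B1 B2 R \<longleftrightarrow> (\<forall>x\<in>Z1. \<forall>y. R x y \<and> y \<in> B2 \<longrightarrow> x \<in> B1)"

definition surj_cls :: "'a::ab_group_add set \<Rightarrow> 'b::ab_group_add set \<Rightarrow> 'b set
    \<Rightarrow> ('a \<Rightarrow> 'b \<Rightarrow> bool) \<Rightarrow> bool" where
  "surj_cls Z1 Z2 B2 R \<longleftrightarrow> (\<forall>w\<in>Z2. \<exists>x\<in>Z1. \<exists>w'. R x w' \<and> w - w' \<in> B2)"

definition exact_at :: "'a::ab_group_add set \<Rightarrow> ('a \<Rightarrow> 'b \<Rightarrow> bool)
    \<Rightarrow> 'b::ab_group_add set \<Rightarrow> 'b set \<Rightarrow> ('b \<Rightarrow> 'c \<Rightarrow> bool) \<Rightarrow> 'c::ab_group_add set \<Rightarrow> bool" where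
  "exact_at ZX R ZY BY S BW \<longleftrightarrow>
     {y \<in> ZY. \<exists>w. S y w \<and> w \<in> BW} = {y \<in> ZY. \<exists>x\<in>ZX. \<exists>y'. R x y' \<and> y - y' \<in> BY}"

definition M0 :: "'m::ab_group_add set \<Rightarrow> ('m \<Rightarrow> 'm) \<Rightarrow> 'm set" where
  "M0 Dr phi = {z \<in> Dr. phi z = z}"

definition ImPhi :: "'m::ab_group_add set \<Rightarrow> ('m \<Rightarrow> 'm) \<Rightarrow> 'm set" where
  "ImPhi Dr phi = (\<lambda>u. phi u - u) ` Dr"

definition d0 :: "('m::ab_group_add \<Rightarrow> 'm) \<Rightarrow> ('m \<Rightarrow> 'm) \<Rightarrow> ('m \<Rightarrow> 'm) \<Rightarrow> 'm \<Rightarrow> 'm \<times> 'm \<times> 'm" where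
  "d0 phi gam tau a = (phi a - a, gam a - a, tau a - a)"

definition d1 :: "('m::ab_group_add \<Rightarrow> 'm) \<Rightarrow> ('m \<Rightarrow> 'm) \<Rightarrow> ('m \<Rightarrow> 'm) \<Rightarrow> ('m \<Rightarrow> 'm)
    \<Rightarrow> 'm \<times> 'm \<times> 'm \<Rightarrow> 'm \<times> 'm \<times> 'm" where
  "d1 phi gam tau dinv t = (case t of (a, b, c) \<Rightarrow>
     (gam a - a + (b - phi b), tau a - a + (c - phi c), tau b - b + (c - dinv (gam c))))"

definition d2 :: "('m::ab_group_add \<Rightarrow> 'm) \<Rightarrow> ('m \<Rightarrow> 'm) \<Rightarrow> ('m \<Rightarrow> 'm) \<Rightarrow> ('m \<Rightarrow> 'm)
    \<Rightarrow> 'm \<times> 'm \<times> 'm \<Rightarrow> 'm" where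
  "d2 phi gam tau dinv t = (case t of (a, b, c) \<Rightarrow>
     tau a - a + (b - dinv (gam b)) + (phi c - c))"

definition Z_H1M0 where
  "Z_H1M0 Dr phi gam tau dinv =
     {(y, z). y \<in> M0 Dr phi \<and> z \<in> M0 Dr phi \<and> tau y - y + (z - dinv (gam z)) = 0}"
definition B_H1M0 where
  "B_H1M0 Dr phi gam tau = (\<lambda>m. (gam m - m, tau m - m)) ` M0 Dr phi"

definition Z_H1tot where
  "Z_H1tot Dr Dpr phi gam tau dinv = {t \<in> Dpr \<times> Dr \<times> Dr. d1 phi gam tau dinv t = (0, 0, 0)}"
definition B_H1tot where
  "B_H1tot Dr phi gam tau = d0 phi gam tau ` Dr"

text \<open>N^{tau=1,gamma=1} with N = D^{pr}/(phi-1)D^r, as cycles/boundaries in D^{pr}\<close>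
definition Z_H0N where
  "Z_H0N Dr Dpr phi gam tau =
     {x \<in> Dpr. tau x - x \<in> ImPhi Dr phi \<and> gam x - x \<in> ImPhi Dr phi}"

definition B_H2M0 where
  "B_H2M0 Dr phi gam tau dinv =
     {tau y - y + (z - dinv (gam z)) | y z. y \<in> M0 Dr phi \<and> z \<in> M0 Dr phi}"

definition Z_H2tot where
  "Z_H2tot Dr Dpr phi gam tau dinv = {t \<in> Dpr \<times> Dpr \<times> Dr. d2 phi gam tau dinv t = 0}"
definition B_H2tot where
  "B_H2tot Dr Dpr phi gam tau dinv = d1 phi gam tau dinv ` (Dpr \<times> Dr \<times> Dr)"

text \<open>ker g_N and im f_N, lifted to D^{pr} x D^{pr}\<close>
definition Z_H1N where
  "Z_H1N Dr Dpr phi gam tau dinv =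
     {(a, b). a \<in> Dpr \<and> b \<in> Dpr \<and> tau a - a + (b - dinv (gam b)) \<in> ImPhi Dr phi}"
definition B_H1N where
  "B_H1N Dr Dpr phi gam tau =
     {(gam m - m + (phi u - u), tau m - m + (phi v - v)) | m u v. m \<in> Dpr \<and> u \<in> Dr \<and> v \<in> Dr}"

definition R1 :: "'m::ab_group_add \<times> 'm \<Rightarrow> 'm \<times> 'm \<times> 'm \<Rightarrow> bool" where
  "R1 p t \<longleftrightarrow> t = (0, fst p, snd p)"
definition R2 :: "'m::ab_group_add \<times> 'm \<times> 'm \<Rightarrow> 'm \<Rightarrow> bool" where
  "R2 t w \<longleftrightarrow> w = fst t"
definition R3 where
  "R3 Dr phi gam tau dinv x w \<longleftrightarrow> (\<exists>y\<in>Dr. \<exists>z\<in>Dr. gam x - x = phi y - y \<and> tau x - x = phi z - z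
      \<and> w = tau y - y + (z - dinv (gam z)))"
definition R4 :: "'m::ab_group_add \<Rightarrow> 'm \<times> 'm \<times> 'm \<Rightarrow> bool" where
  "R4 z t \<longleftrightarrow> t = (0, 0, z)"
definition R5 :: "'m::ab_group_add \<times> 'm \<times> 'm \<Rightarrow> 'm \<times> 'm \<Rightarrow> bool" where
  "R5 t w \<longleftrightarrow> w = (fst t, fst (snd t))"

end

theory Submission
  imports Defs
begin

lemma subgrp_image:
  fixes f :: "'a::ab_group_add \<Rightarrow> 'b::ab_group_add"
  assumes A: "subgrp A" and f: "\<And>x y. x \<in> A \<Longrightarrow> y \<in> A \<Longrightarrow> f (x + y) = f x + f y"
  shows "subgrp (f ` A)"
proof -
  have a: "0 \<in> A" "\<And>a. a \<in> A \<Longrightarrow> - a \<in> A" "\<And>a b. a \<in> A \<Longrightarrow> b \<in> A \<Longrightarrow> a + b \<in> A"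
    using A unfolding subgrp_def by auto
  have f0: "f 0 = 0" using f[OF a(1) a(1)] by simp
  have fn: "f (- x) = - f x" if "x \<in> A" for x
    using f[OF that a(2)[OF that]] f0 by (simp add: eq_neg_iff_add_eq_0 add.commute)
  show ?thesis unfolding subgrp_def
  proof (intro conjI ballI)
    show "0 \<in> f ` A" using f0 a(1) by (metis image_eqI)
  next
    fix u v assume "u \<in> f ` A" "v \<in> f ` A"
    then obtain x y where "x \<in> A" "y \<in> A" "u = f x" "v = f y" by auto
    then show "u + v \<in> f ` A" "- u \<in> f ` A"
      using f a fn by (metis image_eqI)+
  qed
qed

lemma subgrp_preimage:
  fixes f :: "'a::ab_group_add \<Rightarrow> 'b::ab_group_add"
  assumes A: "subgrp A" and B: "subgrp B" and f: "\<And>x y. x \<in> A \<Longrightarrow> y \<in> A \<Longrightarrow> f (x + y) = f x + f y"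
  shows "subgrp {x \<in> A. f x \<in> B}"
proof -
  have a: "0 \<in> A" "\<And>a. a \<in> A \<Longrightarrow> - a \<in> A" "\<And>a b. a \<in> A \<Longrightarrow> b \<in> A \<Longrightarrow> a + b \<in> A"
    using A unfolding subgrp_def by auto
  have b: "0 \<in> B" "\<And>a. a \<in> B \<Longrightarrow> - a \<in> B" "\<And>a b. a \<in> B \<Longrightarrow> b \<in> B \<Longrightarrow> a + b \<in> B"
    using B unfolding subgrp_def by auto
  have f0: "f 0 = 0" using f[OF a(1) a(1)] by simp
  have fn: "f (- x) = - f x" if "x \<in> A" for x
    using f[OF that a(2)[OF that]] f0 by (simp add: eq_neg_iff_add_eq_0 add.commute)
  show ?thesis unfolding subgrp_def using a b f0 fn f by auto
qed

lemma subgrp_prod: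
  assumes "subgrp (A::'a::ab_group_add set)" "subgrp (B::'b::ab_group_add set)"
  shows "subgrp (A \<times> B)"
  using assms unfolding subgrp_def by (auto simp: zero_prod_def)

lemma subgrp_Int:
  assumes "subgrp (A::'a::ab_group_add set)" "subgrp B"
  shows "subgrp (A \<inter> B)"
  using assms unfolding subgrp_def by auto

locale P41 =
  fixes Dr Dpr :: "'m::ab_group_add set"
    and phi gam tau dlt dinv :: "'m \<Rightarrow> 'm"
  assumes Dr_grp: "subgrp Dr" and Dpr_grp: "subgrp Dpr" and incl: "Dr \<subseteq> Dpr"
    and gam_add: "\<forall>x\<in>Dpr. \<forall>y\<in>Dpr. gam (x + y) = gam x + gam y"
    and tau_add: "\<forall>x\<in>Dpr. \<forall>y\<in>Dpr. tau (x + y) = tau x + tau y"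
    and dlt_add: "\<forall>x\<in>Dpr. \<forall>y\<in>Dpr. dlt (x + y) = dlt x + dlt y"
    and dinv_add: "\<forall>x\<in>Dpr. \<forall>y\<in>Dpr. dinv (x + y) = dinv x + dinv y"
    and phi_add: "\<forall>x\<in>Dr. \<forall>y\<in>Dr. phi (x + y) = phi x + phi y"
    and gam_Dr: "gam ` Dr \<subseteq> Dr" and gam_Dpr: "gam ` Dpr \<subseteq> Dpr"
    and tau_Dr: "tau ` Dr \<subseteq> Dr" and tau_Dpr: "tau ` Dpr \<subseteq> Dpr"
    and dlt_Dr: "dlt ` Dr \<subseteq> Dr" and dlt_Dpr: "dlt ` Dpr \<subseteq> Dpr"
    and dinv_Dr: "dinv ` Dr \<subseteq> Dr" and dinv_Dpr: "dinv ` Dpr \<subseteq> Dpr"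
    and phi_Dr: "phi ` Dr \<subseteq> Dpr"
    and dlt_inv: "\<forall>x\<in>Dpr. dinv (dlt x) = x \<and> dlt (dinv x) = x"
    and gam_tau: "\<forall>x\<in>Dpr. gam (tau x - x) = dlt (tau (gam x) - gam x)"
    and phi_comm: "\<forall>x\<in>Dr. phi (gam x) = gam (phi x) \<and> phi (tau x) = tau (phi x)
                          \<and> phi (dlt x) = dlt (phi x)"
begin

lemma r0[simp]: "0 \<in> Dr" and radd[simp]: "x \<in> Dr \<Longrightarrow> y \<in> Dr \<Longrightarrow> x + y \<in> Dr"
  and rneg[simp]: "x \<in> Dr \<Longrightarrow> - x \<in> Dr"
  using Dr_grp unfolding subgrp_def by auto
lemma rdiff[simp]: "x \<in> Dr \<Longrightarrow> y \<in> Dr \<Longrightarrow> x - y \<in> Dr"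
  by (metis radd rneg diff_conv_add_uminus)
lemma p0[simp]: "0 \<in> Dpr" and padd[simp]: "x \<in> Dpr \<Longrightarrow> y \<in> Dpr \<Longrightarrow> x + y \<in> Dpr"
  and pneg[simp]: "x \<in> Dpr \<Longrightarrow> - x \<in> Dpr"
  using Dpr_grp unfolding subgrp_def by auto
lemma pdiff[simp]: "x \<in> Dpr \<Longrightarrow> y \<in> Dpr \<Longrightarrow> x - y \<in> Dpr"
  by (metis padd pneg diff_conv_add_uminus)
lemma rp[simp]: "x \<in> Dr \<Longrightarrow> x \<in> Dpr" using incl by auto

lemma mem[simp]:
  "x \<in> Dr \<Longrightarrow> gam x \<in> Dr" "x \<in> Dpr \<Longrightarrow> gam x \<in> Dpr"
  "x \<in> Dr \<Longrightarrow> tau x \<in> Dr" "x \<in> Dpr \<Longrightarrow> tau x \<in> Dpr"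
  "x \<in> Dr \<Longrightarrow> dlt x \<in> Dr" "x \<in> Dpr \<Longrightarrow> dlt x \<in> Dpr"
  "x \<in> Dr \<Longrightarrow> dinv x \<in> Dr" "x \<in> Dpr \<Longrightarrow> dinv x \<in> Dpr"
  "x \<in> Dr \<Longrightarrow> phi x \<in> Dpr"
  using gam_Dr gam_Dpr tau_Dr tau_Dpr dlt_Dr dlt_Dpr dinv_Dr dinv_Dpr phi_Dr by auto

lemma additive_lemmas:
  fixes f :: "'a::ab_group_add \<Rightarrow> 'b::ab_group_add"
  assumes "\<forall>x\<in>A. \<forall>y\<in>A. f (x + y) = f x + f y" "subgrp A" "x \<in> A" "y \<in> A"
  shows "f (x - y) = f x - f y" "f (- x) = - f x" "f 0 = 0"
proof -
  have A: "0 \<in> A" "\<And>a. a \<in> A \<Longrightarrow> - a \<in> A" using assms(2) unfolding subgrp_def by auto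
  have h: "f (0 + 0) = f 0 + f 0" using assms(1) A(1) by blast
  then have z: "f 0 = 0" by simp
  have n: "f (- a) = - f a" if a: "a \<in> A" for a
  proof -
    have "f (a + - a) = f a + f (- a)" using assms(1) A a by blast
    then show ?thesis using z by (simp add: eq_neg_iff_add_eq_0 add.commute)
  qed
  show "f 0 = 0" by (rule z)
  show "f (- x) = - f x" using n assms by auto
  have "f (x + - y) = f x + f (- y)" using assms(1,3,4) A by blast
  then show "f (x - y) = f x - f y" using n assms(4) by simp
qed

lemma lin[simp]:
  "x \<in> Dpr \<Longrightarrow> y \<in> Dpr \<Longrightarrow> gam (x + y) = gam x + gam y"
  "x \<in> Dpr \<Longrightarrow> y \<in> Dpr \<Longrightarrow> gam (x - y) = gam x - gam y"
  "x \<in> Dpr \<Longrightarrow> gam (- x) = - gam x"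
  "x \<in> Dpr \<Longrightarrow> y \<in> Dpr \<Longrightarrow> tau (x + y) = tau x + tau y"
  "x \<in> Dpr \<Longrightarrow> y \<in> Dpr \<Longrightarrow> tau (x - y) = tau x - tau y"
  "x \<in> Dpr \<Longrightarrow> tau (- x) = - tau x"
  "x \<in> Dpr \<Longrightarrow> y \<in> Dpr \<Longrightarrow> dlt (x + y) = dlt x + dlt y"
  "x \<in> Dpr \<Longrightarrow> y \<in> Dpr \<Longrightarrow> dlt (x - y) = dlt x - dlt y"
  "x \<in> Dpr \<Longrightarrow> dlt (- x) = - dlt x"
  "x \<in> Dpr \<Longrightarrow> y \<in> Dpr \<Longrightarrow> dinv (x + y) = dinv x + dinv y"
  "x \<in> Dpr \<Longrightarrow> y \<in> Dpr \<Longrightarrow> dinv (x - y) = dinv x - dinv y"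
  "x \<in> Dpr \<Longrightarrow> dinv (- x) = - dinv x"
  "x \<in> Dr \<Longrightarrow> y \<in> Dr \<Longrightarrow> phi (x + y) = phi x + phi y"
  "x \<in> Dr \<Longrightarrow> y \<in> Dr \<Longrightarrow> phi (x - y) = phi x - phi y"
  "x \<in> Dr \<Longrightarrow> phi (- x) = - phi x"
  using gam_add tau_add dlt_add dinv_add phi_add
    additive_lemmas[OF gam_add Dpr_grp] additive_lemmas[OF tau_add Dpr_grp]
    additive_lemmas[OF dlt_add Dpr_grp] additive_lemmas[OF dinv_add Dpr_grp]
    additive_lemmas[OF phi_add Dr_grp]
  by auto

lemma zero[simp]: "gam 0 = 0" "tau 0 = 0" "dlt 0 = 0" "dinv 0 = 0" "phi 0 = 0"
  using additive_lemmas(3)[OF gam_add Dpr_grp p0 p0] additive_lemmas(3)[OF tau_add Dpr_grp p0 p0]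
    additive_lemmas(3)[OF dlt_add Dpr_grp p0 p0] additive_lemmas(3)[OF dinv_add Dpr_grp p0 p0]
    additive_lemmas(3)[OF phi_add Dr_grp r0 r0] by auto

lemma comm[simp]: "x \<in> Dr \<Longrightarrow> phi (gam x) = gam (phi x)"
  "x \<in> Dr \<Longrightarrow> phi (tau x) = tau (phi x)"
  "x \<in> Dr \<Longrightarrow> phi (dinv x) = dinv (phi x)"
proof -
  assume x: "x \<in> Dr"
  show "phi (gam x) = gam (phi x)" "phi (tau x) = tau (phi x)" using phi_comm x by auto
  have "dlt (phi (dinv x)) = phi (dlt (dinv x))" using phi_comm x by simp
  also have "\<dots> = phi x" using dlt_inv x by simp
  finally have "dinv (dlt (phi (dinv x))) = dinv (phi x)" by simp
  then show "phi (dinv x) = dinv (phi x)" using dlt_inv x by simp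
qed

lemma key[simp]: "x \<in> Dpr \<Longrightarrow> dinv (gam (tau x)) = dinv (gam x) + tau (gam x) - gam x"
proof -
  assume x: "x \<in> Dpr"
  have "gam (tau x) = gam (tau x - x) + gam x" using x by simp
  also have "gam (tau x - x) = dlt (tau (gam x) - gam x)" using gam_tau x by simp
  finally have "dinv (gam (tau x)) = dinv (dlt (tau (gam x) - gam x)) + dinv (gam x)"
    using x by simp
  also have "\<dots> = tau (gam x) - gam x + dinv (gam x)" using dlt_inv x by simp
  finally show ?thesis by (simp add: algebra_simps)
qed


lemma grpDr: "subgrp Dr" by (rule Dr_grp)
lemma grpDpr: "subgrp Dpr" by (rule Dpr_grp)

lemma M0_eq: "M0 Dr phi = {z \<in> Dr. phi z - z \<in> {0}}" unfolding M0_def by auto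
lemma grpM0: "subgrp (M0 Dr phi)"
  unfolding M0_eq by (rule subgrp_preimage[OF grpDr]) (auto simp: subgrp_def)
lemma M0D[simp]: "z \<in> M0 Dr phi \<longleftrightarrow> z \<in> Dr \<and> phi z = z" unfolding M0_def by auto

lemma grpIm: "subgrp (ImPhi Dr phi)"
  unfolding ImPhi_def by (rule subgrp_image[OF grpDr]) (simp add: algebra_simps)

lemma sq1: "subquot (Z_H1M0 Dr phi gam tau dinv) (B_H1M0 Dr phi gam tau)"
proof -
  have "Z_H1M0 Dr phi gam tau dinv = {p \<in> M0 Dr phi \<times> M0 Dr phi.
     (\<lambda>(y,z). tau y - y + (z - dinv (gam z))) p \<in> {0}}"
    unfolding Z_H1M0_def by auto
  moreover have "subgrp \<dots>"
    by (rule subgrp_preimage[OF subgrp_prod[OF grpM0 grpM0]]) (auto simp: subgrp_def algebra_simps)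
  moreover have "subgrp (B_H1M0 Dr phi gam tau)"
    unfolding B_H1M0_def by (rule subgrp_image[OF grpM0]) (auto simp: algebra_simps)
  moreover have "B_H1M0 Dr phi gam tau \<subseteq> Z_H1M0 Dr phi gam tau dinv"
    unfolding B_H1M0_def Z_H1M0_def by (auto simp: algebra_simps)
  ultimately show ?thesis unfolding subquot_def by simp
qed


lemma zp: "(0::'a::zero \<times> 'b::zero) = (0, 0)" by (simp add: zero_prod_def)

lemma ImI: "u \<in> Dr \<Longrightarrow> x = phi u - u \<Longrightarrow> x \<in> ImPhi Dr phi"
  unfolding ImPhi_def by auto
lemma ImE: "x \<in> ImPhi Dr phi \<Longrightarrow> (\<And>u. u \<in> Dr \<Longrightarrow> x = phi u - u \<Longrightarrow> P) \<Longrightarrow> P"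
  unfolding ImPhi_def by auto
lemma ImDpr: "x \<in> ImPhi Dr phi \<Longrightarrow> x \<in> Dpr" by (erule ImE) simp

lemma sq2: "subquot (Z_H1tot Dr Dpr phi gam tau dinv) (B_H1tot Dr phi gam tau)"
proof -
  have "Z_H1tot Dr Dpr phi gam tau dinv = {t \<in> Dpr \<times> Dr \<times> Dr. d1 phi gam tau dinv t \<in> {0}}"
    unfolding Z_H1tot_def by (auto simp: zp)
  moreover have "subgrp \<dots>"
    by (rule subgrp_preimage[OF subgrp_prod[OF grpDpr subgrp_prod[OF grpDr grpDr]]])
      (auto simp: subgrp_def algebra_simps d1_def zp)
  moreover have "subgrp (B_H1tot Dr phi gam tau)"
    unfolding B_H1tot_def by (rule subgrp_image[OF grpDr]) (auto simp: algebra_simps d0_def)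
  moreover have "B_H1tot Dr phi gam tau \<subseteq> Z_H1tot Dr Dpr phi gam tau dinv"
    unfolding B_H1tot_def Z_H1tot_def by (auto simp: algebra_simps d0_def d1_def zp)
  ultimately show ?thesis unfolding subquot_def by simp
qed

lemma sq3: "subquot (Z_H0N Dr Dpr phi gam tau) (ImPhi Dr phi)"
proof -
  have "Z_H0N Dr Dpr phi gam tau = {x \<in> Dpr. (tau x - x, gam x - x) \<in> ImPhi Dr phi \<times> ImPhi Dr phi}"
    unfolding Z_H0N_def by auto
  moreover have "subgrp \<dots>"
    by (rule subgrp_preimage[OF grpDpr subgrp_prod[OF grpIm grpIm]]) (auto simp: algebra_simps)
  moreover have "ImPhi Dr phi \<subseteq> Z_H0N Dr Dpr phi gam tau"
  proof
    fix x assume "x \<in> ImPhi Dr phi"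
    then obtain u where u: "u \<in> Dr" "x = phi u - u" by (rule ImE)
    have "tau x - x = phi (tau u - u) - (tau u - u)" "gam x - x = phi (gam u - u) - (gam u - u)"
      using u(1) unfolding u(2) by (simp_all add: algebra_simps)
    then show "x \<in> Z_H0N Dr Dpr phi gam tau" unfolding Z_H0N_def
      using u(1) ImI[of "tau u - u" "tau x - x"] ImI[of "gam u - u" "gam x - x"]
      by (simp add: u(2))
  qed
  ultimately show ?thesis unfolding subquot_def using grpIm by simp
qed

lemma sq4: "subquot (M0 Dr phi) (B_H2M0 Dr phi gam tau dinv)"
proof -
  have "B_H2M0 Dr phi gam tau dinv = (\<lambda>(y,z). tau y - y + (z - dinv (gam z))) ` (M0 Dr phi \<times> M0 Dr phi)"
    unfolding B_H2M0_def by (auto; blast)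
  moreover have "subgrp \<dots>"
    by (rule subgrp_image[OF subgrp_prod[OF grpM0 grpM0]]) (auto simp: algebra_simps)
  moreover have "B_H2M0 Dr phi gam tau dinv \<subseteq> M0 Dr phi"
    unfolding B_H2M0_def by (clarsimp; simp add: algebra_simps)
  ultimately show ?thesis unfolding subquot_def using grpM0 by simp
qed

lemma sq5: "subquot (Z_H2tot Dr Dpr phi gam tau dinv) (B_H2tot Dr Dpr phi gam tau dinv)"
proof -
  have "Z_H2tot Dr Dpr phi gam tau dinv = {t \<in> Dpr \<times> Dpr \<times> Dr. d2 phi gam tau dinv t \<in> {0}}"
    unfolding Z_H2tot_def by auto
  moreover have "subgrp \<dots>"
    by (rule subgrp_preimage[OF subgrp_prod[OF grpDpr subgrp_prod[OF grpDpr grpDr]]])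
      (auto simp: subgrp_def algebra_simps d2_def)
  moreover have "subgrp (B_H2tot Dr Dpr phi gam tau dinv)"
    unfolding B_H2tot_def by (rule subgrp_image[OF subgrp_prod[OF grpDpr subgrp_prod[OF grpDr grpDr]]])
      (auto simp: algebra_simps d1_def)
  moreover have "B_H2tot Dr Dpr phi gam tau dinv \<subseteq> Z_H2tot Dr Dpr phi gam tau dinv"
    unfolding B_H2tot_def Z_H2tot_def by (auto simp: algebra_simps d1_def d2_def)
  ultimately show ?thesis unfolding subquot_def by simp
qed

lemma sq6: "subquot (Z_H1N Dr Dpr phi gam tau dinv) (B_H1N Dr Dpr phi gam tau)"
proof -
  have "Z_H1N Dr Dpr phi gam tau dinv = {p \<in> Dpr \<times> Dpr.
     (\<lambda>(a,b). tau a - a + (b - dinv (gam b))) p \<in> ImPhi Dr phi}"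
    unfolding Z_H1N_def by auto
  moreover have "subgrp \<dots>"
    by (rule subgrp_preimage[OF subgrp_prod[OF grpDpr grpDpr] grpIm]) (auto simp: algebra_simps)
  moreover have "B_H1N Dr Dpr phi gam tau = (\<lambda>(m,u,v). (gam m - m + (phi u - u), tau m - m + (phi v - v))) ` (Dpr \<times> Dr \<times> Dr)"
    unfolding B_H1N_def image_def by fastforce
  moreover have "subgrp \<dots>"
    by (rule subgrp_image[OF subgrp_prod[OF grpDpr subgrp_prod[OF grpDr grpDr]]]) (auto simp: algebra_simps)
  moreover have "B_H1N Dr Dpr phi gam tau \<subseteq> Z_H1N Dr Dpr phi gam tau dinv"
  proof
    fix p assume "p \<in> B_H1N Dr Dpr phi gam tau"
    then obtain m u v where muv: "m \<in> Dpr" "u \<in> Dr" "v \<in> Dr"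
      "p = (gam m - m + (phi u - u), tau m - m + (phi v - v))" unfolding B_H1N_def by auto
    let ?a = "gam m - m + (phi u - u)" and ?b = "tau m - m + (phi v - v)"
    have "tau ?a - ?a + (?b - dinv (gam ?b)) = phi (tau u - u + (v - dinv (gam v))) - (tau u - u + (v - dinv (gam v)))"
      using muv by (simp add: algebra_simps)
    then show "p \<in> Z_H1N Dr Dpr phi gam tau dinv" unfolding Z_H1N_def using muv
      by (auto intro!: ImI[of "tau u - u + (v - dinv (gam v))"])
  qed
  ultimately show ?thesis unfolding subquot_def by simp
qed


lemma tg: "x \<in> Dpr \<Longrightarrow> tau (gam x - x) - (gam x - x) + ((tau x - x) - dinv (gam (tau x - x))) = 0"
  by (simp add: algebra_simps)

lemma fcomm: "y \<in> Dr \<Longrightarrow> z \<in> Dr \<Longrightarrow>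
  phi (tau y - y + (z - dinv (gam z))) - (tau y - y + (z - dinv (gam z)))
  = tau (phi y - y) - (phi y - y) + ((phi z - z) - dinv (gam (phi z - z)))"
  by (simp add: algebra_simps)

lemma fcomm2: "y \<in> Dr \<Longrightarrow> phi (gam y - y) - (gam y - y) = gam (phi y - y) - (phi y - y)"
  "y \<in> Dr \<Longrightarrow> phi (tau y - y) - (tau y - y) = tau (phi y - y) - (phi y - y)"
  by (simp_all add: algebra_simps)

lemma wd1: "wd_map (Z_H1M0 Dr phi gam tau dinv) (B_H1M0 Dr phi gam tau)
           (Z_H1tot Dr Dpr phi gam tau dinv) (B_H1tot Dr phi gam tau) R1"
  unfolding wd_map_def
proof (intro conjI sq1 sq2)
  show "\<forall>x\<in>Z_H1M0 Dr phi gam tau dinv. \<exists>y. R1 x y" by (simp add: R1_def)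
  show "\<forall>x\<in>Z_H1M0 Dr phi gam tau dinv. \<forall>y. R1 x y \<longrightarrow> y \<in> Z_H1tot Dr Dpr phi gam tau dinv"
    by (auto simp: R1_def Z_H1M0_def Z_H1tot_def d1_def)
  show "\<forall>x\<in>Z_H1M0 Dr phi gam tau dinv. \<forall>x'\<in>Z_H1M0 Dr phi gam tau dinv. \<forall>y y'.
     R1 x y \<and> R1 x' y' \<and> x - x' \<in> B_H1M0 Dr phi gam tau \<longrightarrow> y - y' \<in> B_H1tot Dr phi gam tau"
  proof (intro ballI allI impI)
    fix x x' y y' assume "R1 x y \<and> R1 x' y' \<and> x - x' \<in> B_H1M0 Dr phi gam tau"
    then obtain m where m: "m \<in> Dr" "phi m = m" "x - x' = (gam m - m, tau m - m)"
      and y: "y = (0, fst x, snd x)" "y' = (0, fst x', snd x')"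
      unfolding R1_def B_H1M0_def by auto
    have "y - y' = d0 phi gam tau m" using m y unfolding d0_def
      by (cases x, cases x') simp
    then show "y - y' \<in> B_H1tot Dr phi gam tau" unfolding B_H1tot_def using m by auto
  qed
  show "\<forall>x\<in>Z_H1M0 Dr phi gam tau dinv. \<forall>x'\<in>Z_H1M0 Dr phi gam tau dinv. \<forall>y y'.
     R1 x y \<and> R1 x' y' \<longrightarrow> R1 (x + x') (y + y')" by (simp add: R1_def prod_eq_iff)
qed

lemma wd2: "wd_map (Z_H1tot Dr Dpr phi gam tau dinv) (B_H1tot Dr phi gam tau)
           (Z_H0N Dr Dpr phi gam tau) (ImPhi Dr phi) R2"
  unfolding wd_map_def
proof (intro conjI sq2 sq3)
  show "\<forall>x\<in>Z_H1tot Dr Dpr phi gam tau dinv. \<exists>y. R2 x y" by (simp add: R2_def)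
  show "\<forall>x\<in>Z_H1tot Dr Dpr phi gam tau dinv. \<forall>y. R2 x y \<longrightarrow> y \<in> Z_H0N Dr Dpr phi gam tau"
  proof (intro ballI allI impI)
    fix t w assume t: "t \<in> Z_H1tot Dr Dpr phi gam tau dinv" and "R2 t w"
    obtain a b c where abc: "t = (a, b, c)" by (cases t)
    have w: "w = a" using \<open>R2 t w\<close> abc by (simp add: R2_def)
    from t abc have h: "a \<in> Dpr" "b \<in> Dr" "c \<in> Dr" "gam a - a + (b - phi b) = 0"
      "tau a - a + (c - phi c) = 0"
      unfolding Z_H1tot_def d1_def by (auto simp: zp)
    have "gam a - a = phi b - b" "tau a - a = phi c - c" using h(4,5)
      by (simp_all add: algebra_simps eq_neg_iff_add_eq_0[symmetric])
    then show "w \<in> Z_H0N Dr Dpr phi gam tau" unfolding Z_H0N_def w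
      using h by (auto intro: ImI)
  qed
  show "\<forall>x\<in>Z_H1tot Dr Dpr phi gam tau dinv. \<forall>x'\<in>Z_H1tot Dr Dpr phi gam tau dinv. \<forall>y y'.
     R2 x y \<and> R2 x' y' \<and> x - x' \<in> B_H1tot Dr phi gam tau \<longrightarrow> y - y' \<in> ImPhi Dr phi"
    by (auto simp: R2_def B_H1tot_def d0_def ImPhi_def)
  show "\<forall>x\<in>Z_H1tot Dr Dpr phi gam tau dinv. \<forall>x'\<in>Z_H1tot Dr Dpr phi gam tau dinv. \<forall>y y'.
     R2 x y \<and> R2 x' y' \<longrightarrow> R2 (x + x') (y + y')" by (simp add: R2_def)
qed


lemma Z0NE: assumes "x \<in> Z_H0N Dr Dpr phi gam tau"
  obtains y z where "x \<in> Dpr" "y \<in> Dr" "z \<in> Dr" "gam x - x = phi y - y" "tau x - x = phi z - z"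
  using assms unfolding Z_H0N_def ImPhi_def by auto

lemma R3_M0: assumes x: "x \<in> Dpr" and y: "y \<in> Dr" and z: "z \<in> Dr"
  and gy: "gam x - x = phi y - y" and tz: "tau x - x = phi z - z"
  shows "tau y - y + (z - dinv (gam z)) \<in> M0 Dr phi"
proof -
  let ?w = "tau y - y + (z - dinv (gam z))"
  have "phi ?w - ?w = tau (phi y - y) - (phi y - y) + ((phi z - z) - dinv (gam (phi z - z)))"
    using y z by (rule fcomm)
  also have "\<dots> = tau (gam x - x) - (gam x - x) + ((tau x - x) - dinv (gam (tau x - x)))"
    by (simp only: gy tz)
  also have "\<dots> = 0" using x by (rule tg)
  finally show ?thesis using y z by simp
qed

lemma wd3: "wd_map (Z_H0N Dr Dpr phi gam tau) (ImPhi Dr phi)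
           (M0 Dr phi) (B_H2M0 Dr phi gam tau dinv) (R3 Dr phi gam tau dinv)"
  unfolding wd_map_def
proof (intro conjI sq3 sq4)
  show "\<forall>x\<in>Z_H0N Dr Dpr phi gam tau. \<exists>y. R3 Dr phi gam tau dinv x y"
  proof
    fix x assume "x \<in> Z_H0N Dr Dpr phi gam tau"
    then obtain y z where "x \<in> Dpr" "y \<in> Dr" "z \<in> Dr" "gam x - x = phi y - y" "tau x - x = phi z - z"
      by (rule Z0NE)
    then show "\<exists>w. R3 Dr phi gam tau dinv x w" unfolding R3_def by blast
  qed
  show "\<forall>x\<in>Z_H0N Dr Dpr phi gam tau. \<forall>w. R3 Dr phi gam tau dinv x w \<longrightarrow> w \<in> M0 Dr phi"
  proof (intro ballI allI impI)
    fix x w assume x: "x \<in> Z_H0N Dr Dpr phi gam tau" and "R3 Dr phi gam tau dinv x w"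
    then obtain y z where "y \<in> Dr" "z \<in> Dr" "gam x - x = phi y - y" "tau x - x = phi z - z"
      and w: "w = tau y - y + (z - dinv (gam z))" unfolding R3_def by blast
    moreover have "x \<in> Dpr" using x unfolding Z_H0N_def by auto
    ultimately show "w \<in> M0 Dr phi" using R3_M0 by blast
  qed
  show "\<forall>x\<in>Z_H0N Dr Dpr phi gam tau. \<forall>x'\<in>Z_H0N Dr Dpr phi gam tau. \<forall>w w'.
     R3 Dr phi gam tau dinv x w \<and> R3 Dr phi gam tau dinv x' w' \<and> x - x' \<in> ImPhi Dr phi
     \<longrightarrow> w - w' \<in> B_H2M0 Dr phi gam tau dinv"
  proof (intro ballI allI impI)
    fix x x' w w' assume x: "x \<in> Z_H0N Dr Dpr phi gam tau" and x': "x' \<in> Z_H0N Dr Dpr phi gam tau"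
      and H: "R3 Dr phi gam tau dinv x w \<and> R3 Dr phi gam tau dinv x' w' \<and> x - x' \<in> ImPhi Dr phi"
    have xD: "x \<in> Dpr" "x' \<in> Dpr" using x x' unfolding Z_H0N_def by auto
    obtain y z where yz: "y \<in> Dr" "z \<in> Dr" "gam x - x = phi y - y" "tau x - x = phi z - z"
      and w: "w = tau y - y + (z - dinv (gam z))" using H unfolding R3_def by blast
    obtain y' z' where yz': "y' \<in> Dr" "z' \<in> Dr" "gam x' - x' = phi y' - y'" "tau x' - x' = phi z' - z'"
      and w': "w' = tau y' - y' + (z' - dinv (gam z'))" using H unfolding R3_def by blast
    obtain u where u: "u \<in> Dr" "x - x' = phi u - u" using H by (blast elim: ImE)
    define m1 where "m1 = y - y' - (gam u - u)"
    define m2 where "m2 = z - z' - (tau u - u)"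
    have m1D: "m1 \<in> Dr" "m2 \<in> Dr" unfolding m1_def m2_def using yz yz' u by simp_all
    have "phi m1 - m1 = (phi y - y) - (phi y' - y') - (phi (gam u - u) - (gam u - u))"
      unfolding m1_def using yz yz' u by (simp add: algebra_simps)
    also have "\<dots> = (gam x - x) - (gam x' - x') - (gam (phi u - u) - (phi u - u))"
      using u(1) by (simp only: yz(3) yz'(3) fcomm2)
    also have "\<dots> = (gam x - x) - (gam x' - x') - (gam (x - x') - (x - x'))"
      by (simp only: u(2))
    also have "\<dots> = 0" using xD by (simp add: algebra_simps)
    finally have pm1: "phi m1 = m1" by simp
    have "phi m2 - m2 = (phi z - z) - (phi z' - z') - (phi (tau u - u) - (tau u - u))"
      unfolding m2_def using yz yz' u by (simp add: algebra_simps)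
    also have "\<dots> = (tau x - x) - (tau x' - x') - (tau (phi u - u) - (phi u - u))"
      using u(1) by (simp only: yz(4) yz'(4) fcomm2)
    also have "\<dots> = (tau x - x) - (tau x' - x') - (tau (x - x') - (x - x'))"
      by (simp only: u(2))
    also have "\<dots> = 0" using xD by (simp add: algebra_simps)
    finally have pm2: "phi m2 = m2" by simp
    have "w - w' = tau m1 - m1 + (m2 - dinv (gam m2))
        + (tau (gam u - u) - (gam u - u) + ((tau u - u) - dinv (gam (tau u - u))))"
      unfolding w w' m1_def m2_def using yz yz' u by (simp add: algebra_simps)
    also have "\<dots> = tau m1 - m1 + (m2 - dinv (gam m2))" using u(1) tg[of u] by simp
    finally show "w - w' \<in> B_H2M0 Dr phi gam tau dinv" unfolding B_H2M0_def
      using m1D pm1 pm2 by auto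
  qed
  show "\<forall>x\<in>Z_H0N Dr Dpr phi gam tau. \<forall>x'\<in>Z_H0N Dr Dpr phi gam tau. \<forall>w w'.
     R3 Dr phi gam tau dinv x w \<and> R3 Dr phi gam tau dinv x' w' \<longrightarrow>
     R3 Dr phi gam tau dinv (x + x') (w + w')"
  proof (intro ballI allI impI)
    fix x x' w w' assume x: "x \<in> Z_H0N Dr Dpr phi gam tau" and x': "x' \<in> Z_H0N Dr Dpr phi gam tau"
      and H: "R3 Dr phi gam tau dinv x w \<and> R3 Dr phi gam tau dinv x' w'"
    have xD: "x \<in> Dpr" "x' \<in> Dpr" using x x' unfolding Z_H0N_def by auto
    obtain y z where yz: "y \<in> Dr" "z \<in> Dr" "gam x - x = phi y - y" "tau x - x = phi z - z"
      and w: "w = tau y - y + (z - dinv (gam z))" using H unfolding R3_def by blast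
    obtain y' z' where yz': "y' \<in> Dr" "z' \<in> Dr" "gam x' - x' = phi y' - y'" "tau x' - x' = phi z' - z'"
      and w': "w' = tau y' - y' + (z' - dinv (gam z'))" using H unfolding R3_def by blast
    have "gam (x + x') - (x + x') = phi (y + y') - (y + y')"
      using xD yz yz' by (simp add: algebra_simps)
    moreover have "tau (x + x') - (x + x') = phi (z + z') - (z + z')"
      using xD yz yz' by (simp add: algebra_simps)
    moreover have "w + w' = tau (y + y') - (y + y') + ((z + z') - dinv (gam (z + z')))"
      unfolding w w' using yz yz' by (simp add: algebra_simps)
    ultimately show "R3 Dr phi gam tau dinv (x + x') (w + w')" unfolding R3_def
      using yz yz' by (intro bexI[of _ "y + y'"] bexI[of _ "z + z'"]) auto
  qed
qed


lemma B2M0I: "y \<in> Dr \<Longrightarrow> phi y = y \<Longrightarrow> z \<in> Dr \<Longrightarrow> phi z = z \<Longrightarrow>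
   w = tau y - y + (z - dinv (gam z)) \<Longrightarrow> w \<in> B_H2M0 Dr phi gam tau dinv"
  unfolding B_H2M0_def by auto
lemma B2M0E: "w \<in> B_H2M0 Dr phi gam tau dinv \<Longrightarrow>
  (\<And>y z. y \<in> Dr \<Longrightarrow> phi y = y \<Longrightarrow> z \<in> Dr \<Longrightarrow> phi z = z \<Longrightarrow>
   w = tau y - y + (z - dinv (gam z)) \<Longrightarrow> P) \<Longrightarrow> P"
  unfolding B_H2M0_def by auto
lemma B1NI: "m \<in> Dpr \<Longrightarrow> u \<in> Dr \<Longrightarrow> v \<in> Dr \<Longrightarrow>
   p = (gam m - m + (phi u - u), tau m - m + (phi v - v)) \<Longrightarrow> p \<in> B_H1N Dr Dpr phi gam tau"
  unfolding B_H1N_def by auto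
lemma B1NE: "p \<in> B_H1N Dr Dpr phi gam tau \<Longrightarrow>
   (\<And>m u v. m \<in> Dpr \<Longrightarrow> u \<in> Dr \<Longrightarrow> v \<in> Dr \<Longrightarrow>
   p = (gam m - m + (phi u - u), tau m - m + (phi v - v)) \<Longrightarrow> P) \<Longrightarrow> P"
  unfolding B_H1N_def by auto
lemma B2totI: "a \<in> Dpr \<Longrightarrow> b \<in> Dr \<Longrightarrow> c \<in> Dr \<Longrightarrow>
   t = (gam a - a + (b - phi b), tau a - a + (c - phi c), tau b - b + (c - dinv (gam c)))
   \<Longrightarrow> t \<in> B_H2tot Dr Dpr phi gam tau dinv"
  unfolding B_H2tot_def d1_def by (auto simp: image_iff)
lemma B2totE: "t \<in> B_H2tot Dr Dpr phi gam tau dinv \<Longrightarrow>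
   (\<And>a b c. a \<in> Dpr \<Longrightarrow> b \<in> Dr \<Longrightarrow> c \<in> Dr \<Longrightarrow>
   t = (gam a - a + (b - phi b), tau a - a + (c - phi c), tau b - b + (c - dinv (gam c))) \<Longrightarrow> P) \<Longrightarrow> P"
  unfolding B_H2tot_def d1_def by auto
lemma B1totI: "u \<in> Dr \<Longrightarrow> t = (phi u - u, gam u - u, tau u - u) \<Longrightarrow> t \<in> B_H1tot Dr phi gam tau"
  unfolding B_H1tot_def d0_def by auto
lemma B1totE: "t \<in> B_H1tot Dr phi gam tau \<Longrightarrow>
   (\<And>u. u \<in> Dr \<Longrightarrow> t = (phi u - u, gam u - u, tau u - u) \<Longrightarrow> P) \<Longrightarrow> P"
  unfolding B_H1tot_def d0_def by auto
lemma Z1totI: "a \<in> Dpr \<Longrightarrow> b \<in> Dr \<Longrightarrow> c \<in> Dr \<Longrightarrow> gam a - a = phi b - b \<Longrightarrow>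
  tau a - a = phi c - c \<Longrightarrow> tau b - b + (c - dinv (gam c)) = 0 \<Longrightarrow>
  (a, b, c) \<in> Z_H1tot Dr Dpr phi gam tau dinv"
  unfolding Z_H1tot_def d1_def by (simp add: zp algebra_simps)
lemma Z1totE: "t \<in> Z_H1tot Dr Dpr phi gam tau dinv \<Longrightarrow>
  (\<And>a b c. t = (a, b, c) \<Longrightarrow> a \<in> Dpr \<Longrightarrow> b \<in> Dr \<Longrightarrow> c \<in> Dr \<Longrightarrow> gam a - a = phi b - b \<Longrightarrow>
  tau a - a = phi c - c \<Longrightarrow> tau b - b + (c - dinv (gam c)) = 0 \<Longrightarrow> P) \<Longrightarrow> P"
  unfolding Z_H1tot_def d1_def
  by (cases t) (auto simp: zp algebra_simps eq_neg_iff_add_eq_0[symmetric])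
lemma Z2totI: "a \<in> Dpr \<Longrightarrow> b \<in> Dpr \<Longrightarrow> c \<in> Dr \<Longrightarrow>
  tau a - a + (b - dinv (gam b)) + (phi c - c) = 0 \<Longrightarrow>
  (a, b, c) \<in> Z_H2tot Dr Dpr phi gam tau dinv"
  unfolding Z_H2tot_def d2_def by simp
lemma Z2totE: "t \<in> Z_H2tot Dr Dpr phi gam tau dinv \<Longrightarrow>
  (\<And>a b c. t = (a, b, c) \<Longrightarrow> a \<in> Dpr \<Longrightarrow> b \<in> Dpr \<Longrightarrow> c \<in> Dr \<Longrightarrow>
  tau a - a + (b - dinv (gam b)) + (phi c - c) = 0 \<Longrightarrow> P) \<Longrightarrow> P"
  unfolding Z_H2tot_def d2_def by (cases t) auto

lemma wd4: "wd_map (M0 Dr phi) (B_H2M0 Dr phi gam tau dinv)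
           (Z_H2tot Dr Dpr phi gam tau dinv) (B_H2tot Dr Dpr phi gam tau dinv) R4"
  unfolding wd_map_def
proof (intro conjI sq4 sq5)
  show "\<forall>x\<in>M0 Dr phi. \<exists>y. R4 x y" by (simp add: R4_def)
  show "\<forall>x\<in>M0 Dr phi. \<forall>y. R4 x y \<longrightarrow> y \<in> Z_H2tot Dr Dpr phi gam tau dinv"
    by (auto simp: R4_def intro!: Z2totI)
  show "\<forall>x\<in>M0 Dr phi. \<forall>x'\<in>M0 Dr phi. \<forall>y y'.
     R4 x y \<and> R4 x' y' \<and> x - x' \<in> B_H2M0 Dr phi gam tau dinv \<longrightarrow> y - y' \<in> B_H2tot Dr Dpr phi gam tau dinv"
  proof (intro ballI allI impI)
    fix x x' y y' assume H: "R4 x y \<and> R4 x' y' \<and> x - x' \<in> B_H2M0 Dr phi gam tau dinv"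
    then have yy: "y - y' = (0, 0, x - x')" by (simp add: R4_def)
    from H obtain a b where ab: "a \<in> Dr" "phi a = a" "b \<in> Dr" "phi b = b"
      "x - x' = tau a - a + (b - dinv (gam b))" by (blast elim: B2M0E)
    show "y - y' \<in> B_H2tot Dr Dpr phi gam tau dinv"
      by (rule B2totI[of 0 a b]) (use ab yy in simp_all)
  qed
  show "\<forall>x\<in>M0 Dr phi. \<forall>x'\<in>M0 Dr phi. \<forall>y y'.
     R4 x y \<and> R4 x' y' \<longrightarrow> R4 (x + x') (y + y')" by (simp add: R4_def)
qed

lemma wd5: "wd_map (Z_H2tot Dr Dpr phi gam tau dinv) (B_H2tot Dr Dpr phi gam tau dinv)
           (Z_H1N Dr Dpr phi gam tau dinv) (B_H1N Dr Dpr phi gam tau) R5"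
  unfolding wd_map_def
proof (intro conjI sq5 sq6)
  show "\<forall>x\<in>Z_H2tot Dr Dpr phi gam tau dinv. \<exists>y. R5 x y" by (simp add: R5_def)
  show "\<forall>x\<in>Z_H2tot Dr Dpr phi gam tau dinv. \<forall>y. R5 x y \<longrightarrow> y \<in> Z_H1N Dr Dpr phi gam tau dinv"
  proof (intro ballI allI impI)
    fix t w assume t: "t \<in> Z_H2tot Dr Dpr phi gam tau dinv" and "R5 t w"
    from t obtain a b c where abc: "t = (a, b, c)" "a \<in> Dpr" "b \<in> Dpr" "c \<in> Dr"
      "tau a - a + (b - dinv (gam b)) + (phi c - c) = 0" by (rule Z2totE)
    have w: "w = (a, b)" using \<open>R5 t w\<close> abc by (simp add: R5_def)
    have e: "tau a - a + (b - dinv (gam b)) = phi (- c) - (- c)" using abc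
      by (simp add: algebra_simps eq_neg_iff_add_eq_0[symmetric])
    have "tau a - a + (b - dinv (gam b)) \<in> ImPhi Dr phi"
      by (rule ImI[OF _ e]) (simp add: abc)
    then show "w \<in> Z_H1N Dr Dpr phi gam tau dinv" unfolding Z_H1N_def w
      using abc by auto
  qed
  show "\<forall>x\<in>Z_H2tot Dr Dpr phi gam tau dinv. \<forall>x'\<in>Z_H2tot Dr Dpr phi gam tau dinv. \<forall>y y'.
     R5 x y \<and> R5 x' y' \<and> x - x' \<in> B_H2tot Dr Dpr phi gam tau dinv \<longrightarrow> y - y' \<in> B_H1N Dr Dpr phi gam tau"
  proof (intro ballI allI impI)
    fix x x' y y' assume H: "R5 x y \<and> R5 x' y' \<and> x - x' \<in> B_H2tot Dr Dpr phi gam tau dinv"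
    then have yy: "y - y' = (fst (x - x'), fst (snd (x - x')))" by (simp add: R5_def)
    from H obtain a b c where abc: "a \<in> Dpr" "b \<in> Dr" "c \<in> Dr"
      "x - x' = (gam a - a + (b - phi b), tau a - a + (c - phi c), tau b - b + (c - dinv (gam c)))"
      by (blast elim: B2totE)
    show "y - y' \<in> B_H1N Dr Dpr phi gam tau"
      by (rule B1NI[of a "- b" "- c"]) (use abc yy in simp_all)
  qed
  show "\<forall>x\<in>Z_H2tot Dr Dpr phi gam tau dinv. \<forall>x'\<in>Z_H2tot Dr Dpr phi gam tau dinv. \<forall>y y'.
     R5 x y \<and> R5 x' y' \<longrightarrow> R5 (x + x') (y + y')" by (simp add: R5_def)
qed

lemma inj1: "inj_cls (Z_H1M0 Dr phi gam tau dinv) (B_H1M0 Dr phi gam tau) (B_H1tot Dr phi gam tau) R1"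
  unfolding inj_cls_def
proof (intro ballI allI impI)
  fix x y assume "R1 x y \<and> y \<in> B_H1tot Dr phi gam tau"
  then obtain u where u: "u \<in> Dr" "(0, fst x, snd x) = (phi u - u, gam u - u, tau u - u)"
    unfolding R1_def by (blast elim: B1totE)
  then have "phi u = u" "x = (gam u - u, tau u - u)" by (auto simp: prod_eq_iff)
  then show "x \<in> B_H1M0 Dr phi gam tau" unfolding B_H1M0_def using u(1) by auto
qed


lemma Im0: "0 \<in> ImPhi Dr phi" by (rule ImI[of 0]) simp_all

lemma ex1: "exact_at (Z_H1M0 Dr phi gam tau dinv) R1
           (Z_H1tot Dr Dpr phi gam tau dinv) (B_H1tot Dr phi gam tau) R2 (ImPhi Dr phi)"
  unfolding exact_at_def
proof (rule set_eqI, rule iffI)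
  fix t assume "t \<in> {y \<in> Z_H1tot Dr Dpr phi gam tau dinv. \<exists>w. R2 y w \<and> w \<in> ImPhi Dr phi}"
  then have tZ: "t \<in> Z_H1tot Dr Dpr phi gam tau dinv" and tI: "fst t \<in> ImPhi Dr phi"
    by (auto simp: R2_def)
  from tZ obtain a b c where abc: "t = (a, b, c)" "a \<in> Dpr" "b \<in> Dr" "c \<in> Dr"
    "gam a - a = phi b - b" "tau a - a = phi c - c" "tau b - b + (c - dinv (gam c)) = 0"
    by (rule Z1totE)
  from tI abc obtain u where u: "u \<in> Dr" "a = phi u - u" by (auto elim: ImE)
  define x1 where "x1 = b - (gam u - u)"
  define x2 where "x2 = c - (tau u - u)"
  have x12: "x1 \<in> Dr" "x2 \<in> Dr" unfolding x1_def x2_def using abc u by simp_all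
  have "phi x1 - x1 = (phi b - b) - (phi (gam u - u) - (gam u - u))"
    unfolding x1_def using abc u by (simp add: algebra_simps)
  also have "\<dots> = (gam a - a) - (gam (phi u - u) - (phi u - u))"
    using u(1) by (simp only: abc(5) fcomm2)
  also have "\<dots> = 0" by (simp add: u(2))
  finally have p1: "phi x1 = x1" by simp
  have "phi x2 - x2 = (phi c - c) - (phi (tau u - u) - (tau u - u))"
    unfolding x2_def using abc u by (simp add: algebra_simps)
  also have "\<dots> = (tau a - a) - (tau (phi u - u) - (phi u - u))"
    using u(1) by (simp only: abc(6) fcomm2)
  also have "\<dots> = 0" by (simp add: u(2))
  finally have p2: "phi x2 = x2" by simp
  have "tau x1 - x1 + (x2 - dinv (gam x2)) = (tau b - b + (c - dinv (gam c)))
      - (tau (gam u - u) - (gam u - u) + ((tau u - u) - dinv (gam (tau u - u))))"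
    unfolding x1_def x2_def using abc u by (simp add: algebra_simps)
  also have "\<dots> = 0" using abc(7) tg[of u] u(1) by simp
  finally have e: "tau x1 - x1 + (x2 - dinv (gam x2)) = 0" .
  have xZ: "(x1, x2) \<in> Z_H1M0 Dr phi gam tau dinv" unfolding Z_H1M0_def using x12 p1 p2 e by simp
  have "t - (0, x1, x2) \<in> B_H1tot Dr phi gam tau"
    by (rule B1totI[of u]) (use u abc in \<open>simp_all add: x1_def x2_def\<close>)
  then show "t \<in> {y \<in> Z_H1tot Dr Dpr phi gam tau dinv. \<exists>x\<in>Z_H1M0 Dr phi gam tau dinv. \<exists>y'. R1 x y' \<and> y - y' \<in> B_H1tot Dr phi gam tau}"
    using tZ xZ unfolding R1_def by auto
next
  fix t assume "t \<in> {y \<in> Z_H1tot Dr Dpr phi gam tau dinv. \<exists>x\<in>Z_H1M0 Dr phi gam tau dinv. \<exists>y'. R1 x y' \<and> y - y' \<in> B_H1tot Dr phi gam tau}"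
  then obtain x where tZ: "t \<in> Z_H1tot Dr Dpr phi gam tau dinv" and
    "t - (0, fst x, snd x) \<in> B_H1tot Dr phi gam tau" unfolding R1_def by auto
  then obtain u where u: "u \<in> Dr" "t - (0, fst x, snd x) = (phi u - u, gam u - u, tau u - u)"
    by (blast elim: B1totE)
  then have "fst t = phi u - u" by (metis diff_zero fst_conv fst_diff)
  then have "fst t \<in> ImPhi Dr phi" using u(1) by (blast intro: ImI)
  then show "t \<in> {y \<in> Z_H1tot Dr Dpr phi gam tau dinv. \<exists>w. R2 y w \<and> w \<in> ImPhi Dr phi}"
    using tZ by (auto simp: R2_def)
qed

lemma ex2: "exact_at (Z_H1tot Dr Dpr phi gam tau dinv) R2
           (Z_H0N Dr Dpr phi gam tau) (ImPhi Dr phi) (R3 Dr phi gam tau dinv)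
           (B_H2M0 Dr phi gam tau dinv)"
  unfolding exact_at_def
proof (rule set_eqI, rule iffI)
  fix x assume "x \<in> {y \<in> Z_H0N Dr Dpr phi gam tau. \<exists>w. R3 Dr phi gam tau dinv y w \<and> w \<in> B_H2M0 Dr phi gam tau dinv}"
  then obtain w where xZ: "x \<in> Z_H0N Dr Dpr phi gam tau" and R: "R3 Dr phi gam tau dinv x w"
    and wB: "w \<in> B_H2M0 Dr phi gam tau dinv" by auto
  have xD: "x \<in> Dpr" using xZ unfolding Z_H0N_def by auto
  obtain y z where yz: "y \<in> Dr" "z \<in> Dr" "gam x - x = phi y - y" "tau x - x = phi z - z"
    and w: "w = tau y - y + (z - dinv (gam z))" using R unfolding R3_def by blast
  obtain m1 m2 where m: "m1 \<in> Dr" "phi m1 = m1" "m2 \<in> Dr" "phi m2 = m2"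
    and wm: "w = tau m1 - m1 + (m2 - dinv (gam m2))" using wB by (rule B2M0E)
  have g1: "gam x - x = phi (y - m1) - (y - m1)" unfolding yz(3) using yz m by (simp add: algebra_simps)
  have g2: "tau x - x = phi (z - m2) - (z - m2)" unfolding yz(4) using yz m by (simp add: algebra_simps)
  have "tau (y - m1) - (y - m1) + ((z - m2) - dinv (gam (z - m2)))
      = (tau y - y + (z - dinv (gam z))) - (tau m1 - m1 + (m2 - dinv (gam m2)))"
    using yz m by (simp add: algebra_simps)
  also have "\<dots> = 0" using w wm by simp
  finally have "(x, y - m1, z - m2) \<in> Z_H1tot Dr Dpr phi gam tau dinv"
    using Z1totI[OF xD _ _ g1 g2] yz m by simp
  moreover have "x - x \<in> ImPhi Dr phi" using Im0 by simp
  ultimately show "x \<in> {y \<in> Z_H0N Dr Dpr phi gam tau. \<exists>t\<in>Z_H1tot Dr Dpr phi gam tau dinv. \<exists>y'. R2 t y' \<and> y - y' \<in> ImPhi Dr phi}"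
    using xZ unfolding R2_def by force
next
  fix x assume "x \<in> {y \<in> Z_H0N Dr Dpr phi gam tau. \<exists>t\<in>Z_H1tot Dr Dpr phi gam tau dinv. \<exists>y'. R2 t y' \<and> y - y' \<in> ImPhi Dr phi}"
  then obtain t where xZ: "x \<in> Z_H0N Dr Dpr phi gam tau" and tZ: "t \<in> Z_H1tot Dr Dpr phi gam tau dinv"
    and xt: "x - fst t \<in> ImPhi Dr phi" unfolding R2_def by auto
  have xD: "x \<in> Dpr" using xZ unfolding Z_H0N_def by auto
  from tZ obtain a b c where abc: "t = (a, b, c)" "a \<in> Dpr" "b \<in> Dr" "c \<in> Dr"
    "gam a - a = phi b - b" "tau a - a = phi c - c" "tau b - b + (c - dinv (gam c)) = 0"
    by (rule Z1totE)
  from xt abc obtain u where u: "u \<in> Dr" "x - a = phi u - u" by (auto elim: ImE)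
  define y where "y = b + (gam u - u)"
  define z where "z = c + (tau u - u)"
  have yzD: "y \<in> Dr" "z \<in> Dr" unfolding y_def z_def using abc u by simp_all
  have "gam x - x = (gam a - a) + (gam (x - a) - (x - a))" using xD abc by (simp add: algebra_simps)
  also have "\<dots> = (phi b - b) + (gam (phi u - u) - (phi u - u))" by (simp only: abc(5) u(2))
  also have "\<dots> = phi y - y" unfolding y_def using abc u by (simp add: algebra_simps)
  finally have g1: "gam x - x = phi y - y" .
  have "tau x - x = (tau a - a) + (tau (x - a) - (x - a))" using xD abc by (simp add: algebra_simps)
  also have "\<dots> = (phi c - c) + (tau (phi u - u) - (phi u - u))" by (simp only: abc(6) u(2))
  also have "\<dots> = phi z - z" unfolding z_def using abc u by (simp add: algebra_simps)
  finally have g2: "tau x - x = phi z - z" .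
  have "tau y - y + (z - dinv (gam z)) = (tau b - b + (c - dinv (gam c)))
      + (tau (gam u - u) - (gam u - u) + ((tau u - u) - dinv (gam (tau u - u))))"
    unfolding y_def z_def using abc u by (simp add: algebra_simps)
  also have "\<dots> = 0" using abc(7) tg[of u] u(1) by simp
  finally have "R3 Dr phi gam tau dinv x 0" unfolding R3_def using yzD g1 g2 by metis
  moreover have "(0::'m) \<in> B_H2M0 Dr phi gam tau dinv" by (rule B2M0I[of 0 0]) simp_all
  ultimately show "x \<in> {y \<in> Z_H0N Dr Dpr phi gam tau. \<exists>w. R3 Dr phi gam tau dinv y w \<and> w \<in> B_H2M0 Dr phi gam tau dinv}"
    using xZ by auto
qed


lemma ex3: "exact_at (Z_H0N Dr Dpr phi gam tau) (R3 Dr phi gam tau dinv)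
           (M0 Dr phi) (B_H2M0 Dr phi gam tau dinv) R4 (B_H2tot Dr Dpr phi gam tau dinv)"
  unfolding exact_at_def
proof (rule set_eqI, rule iffI)
  fix z0 assume "z0 \<in> {y \<in> M0 Dr phi. \<exists>w. R4 y w \<and> w \<in> B_H2tot Dr Dpr phi gam tau dinv}"
  then have zM: "z0 \<in> M0 Dr phi" and "(0, 0, z0) \<in> B_H2tot Dr Dpr phi gam tau dinv"
    unfolding R4_def by auto
  then obtain a b c where abc: "a \<in> Dpr" "b \<in> Dr" "c \<in> Dr"
    "(0, 0, z0) = (gam a - a + (b - phi b), tau a - a + (c - phi c), tau b - b + (c - dinv (gam c)))"
    by (blast elim: B2totE)
  have e1: "gam a - a = phi b - b" "tau a - a = phi c - c"
    "z0 = tau b - b + (c - dinv (gam c))" using abc(4)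
    by (simp_all add: algebra_simps eq_neg_iff_add_eq_0[symmetric])
  have aZ: "a \<in> Z_H0N Dr Dpr phi gam tau" unfolding Z_H0N_def
    using abc e1 by (auto intro: ImI)
  have "R3 Dr phi gam tau dinv a z0" unfolding R3_def using abc e1 by blast
  moreover have "z0 - z0 \<in> B_H2M0 Dr phi gam tau dinv" by (simp, rule B2M0I[of 0 0]) simp_all
  ultimately show "z0 \<in> {y \<in> M0 Dr phi. \<exists>x\<in>Z_H0N Dr Dpr phi gam tau. \<exists>y'. R3 Dr phi gam tau dinv x y' \<and> y - y' \<in> B_H2M0 Dr phi gam tau dinv}"
    using zM aZ by blast
next
  fix z0 assume "z0 \<in> {y \<in> M0 Dr phi. \<exists>x\<in>Z_H0N Dr Dpr phi gam tau. \<exists>y'. R3 Dr phi gam tau dinv x y' \<and> y - y' \<in> B_H2M0 Dr phi gam tau dinv}"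
  then obtain x w where zM: "z0 \<in> M0 Dr phi" and xZ: "x \<in> Z_H0N Dr Dpr phi gam tau"
    and R: "R3 Dr phi gam tau dinv x w" and wB: "z0 - w \<in> B_H2M0 Dr phi gam tau dinv" by auto
  have xD: "x \<in> Dpr" using xZ unfolding Z_H0N_def by auto
  obtain y z where yz: "y \<in> Dr" "z \<in> Dr" "gam x - x = phi y - y" "tau x - x = phi z - z"
    and w: "w = tau y - y + (z - dinv (gam z))" using R unfolding R3_def by blast
  obtain m1 m2 where m: "m1 \<in> Dr" "phi m1 = m1" "m2 \<in> Dr" "phi m2 = m2"
    and wm: "z0 - w = tau m1 - m1 + (m2 - dinv (gam m2))" using wB by (rule B2M0E)
  have z0e: "z0 = (tau y - y + (z - dinv (gam z))) + (tau m1 - m1 + (m2 - dinv (gam m2)))"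
    using wm unfolding w by (simp add: algebra_simps)
  have "(0, 0, z0) \<in> B_H2tot Dr Dpr phi gam tau dinv"
    apply (rule B2totI[of x "y + m1" "z + m2"])
    using xD yz m apply simp_all
    unfolding yz(3) yz(4) z0e using yz m by (simp_all add: algebra_simps)
  then show "z0 \<in> {y \<in> M0 Dr phi. \<exists>w. R4 y w \<and> w \<in> B_H2tot Dr Dpr phi gam tau dinv}"
    using zM unfolding R4_def by auto
qed

lemma ex4: "exact_at (M0 Dr phi) R4
           (Z_H2tot Dr Dpr phi gam tau dinv) (B_H2tot Dr Dpr phi gam tau dinv) R5
           (B_H1N Dr Dpr phi gam tau)"
  unfolding exact_at_def
proof (rule set_eqI, rule iffI)
  fix t assume "t \<in> {y \<in> Z_H2tot Dr Dpr phi gam tau dinv. \<exists>w. R5 y w \<and> w \<in> B_H1N Dr Dpr phi gam tau}"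
  then have tZ: "t \<in> Z_H2tot Dr Dpr phi gam tau dinv" and tB: "(fst t, fst (snd t)) \<in> B_H1N Dr Dpr phi gam tau"
    unfolding R5_def by auto
  from tZ obtain a b c where abc: "t = (a, b, c)" "a \<in> Dpr" "b \<in> Dpr" "c \<in> Dr"
    "tau a - a + (b - dinv (gam b)) + (phi c - c) = 0" by (rule Z2totE)
  from tB abc obtain m u v where muv: "m \<in> Dpr" "u \<in> Dr" "v \<in> Dr"
    "(a, b) = (gam m - m + (phi u - u), tau m - m + (phi v - v))" by (auto elim: B1NE)
  have ae: "a = gam m - m + (phi u - u)" and be: "b = tau m - m + (phi v - v)" using muv by auto
  define z where "z = c + (tau u - u) + (v - dinv (gam v))"
  have zD: "z \<in> Dr" unfolding z_def using abc muv by simp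
  have "phi z - z = (tau a - a + (b - dinv (gam b)) + (phi c - c))
     - (tau (gam m - m) - (gam m - m) + ((tau m - m) - dinv (gam (tau m - m))))"
    unfolding z_def ae be using abc muv by (simp add: algebra_simps)
  also have "\<dots> = 0" using abc(5) tg[of m] muv(1) by simp
  finally have zM: "z \<in> M0 Dr phi" using zD by simp
  have "t - (0, 0, z) \<in> B_H2tot Dr Dpr phi gam tau dinv"
    apply (rule B2totI[of m "- u" "- v"])
    using muv apply simp_all
    unfolding abc(1) z_def ae be using muv abc by (simp add: algebra_simps)
  then show "t \<in> {y \<in> Z_H2tot Dr Dpr phi gam tau dinv. \<exists>x\<in>M0 Dr phi. \<exists>y'. R4 x y' \<and> y - y' \<in> B_H2tot Dr Dpr phi gam tau dinv}"
    using tZ zM unfolding R4_def by auto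
next
  fix t assume "t \<in> {y \<in> Z_H2tot Dr Dpr phi gam tau dinv. \<exists>x\<in>M0 Dr phi. \<exists>y'. R4 x y' \<and> y - y' \<in> B_H2tot Dr Dpr phi gam tau dinv}"
  then obtain z where tZ: "t \<in> Z_H2tot Dr Dpr phi gam tau dinv" and
    "t - (0, 0, z) \<in> B_H2tot Dr Dpr phi gam tau dinv" unfolding R4_def by auto
  then obtain a b c where abc: "a \<in> Dpr" "b \<in> Dr" "c \<in> Dr"
    "t - (0, 0, z) = (gam a - a + (b - phi b), tau a - a + (c - phi c), tau b - b + (c - dinv (gam c)))"
    by (blast elim: B2totE)
  have "(fst t, fst (snd t)) \<in> B_H1N Dr Dpr phi gam tau"
    apply (rule B1NI[of a "- b" "- c"])
    using abc(1-3) apply simp_all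
    using arg_cong[OF abc(4), of fst] arg_cong[OF abc(4), of "\<lambda>p. fst (snd p)"] abc(1-3)
    by (simp add: algebra_simps)
  then show "t \<in> {y \<in> Z_H2tot Dr Dpr phi gam tau dinv. \<exists>w. R5 y w \<and> w \<in> B_H1N Dr Dpr phi gam tau}"
    using tZ unfolding R5_def by auto
qed

lemma surj5: "surj_cls (Z_H2tot Dr Dpr phi gam tau dinv) (Z_H1N Dr Dpr phi gam tau dinv)
           (B_H1N Dr Dpr phi gam tau) R5"
  unfolding surj_cls_def
proof
  fix p assume "p \<in> Z_H1N Dr Dpr phi gam tau dinv"
  then obtain a b where ab: "p = (a, b)" "a \<in> Dpr" "b \<in> Dpr"
    "tau a - a + (b - dinv (gam b)) \<in> ImPhi Dr phi" unfolding Z_H1N_def by auto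
  then obtain u where u: "u \<in> Dr" "tau a - a + (b - dinv (gam b)) = phi u - u" by (blast elim: ImE)
  have "tau a - a + (b - dinv (gam b)) + (phi (- u) - (- u)) = 0" unfolding u(2) using u(1) by simp
  then have tZ: "(a, b, - u) \<in> Z_H2tot Dr Dpr phi gam tau dinv" using ab u by (intro Z2totI) simp_all
  have "p - (a, b) \<in> B_H1N Dr Dpr phi gam tau" by (rule B1NI[of 0 0 0]) (simp_all add: ab zp)
  then show "\<exists>x\<in>Z_H2tot Dr Dpr phi gam tau dinv. \<exists>w'. R5 x w' \<and> p - w' \<in> B_H1N Dr Dpr phi gam tau"
    using tZ unfolding R5_def by force
qed

lemma main: "wd_map (Z_H1M0 Dr phi gam tau dinv) (B_H1M0 Dr phi gam tau)
           (Z_H1tot Dr Dpr phi gam tau dinv) (B_H1tot Dr phi gam tau) R1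
  \<and> wd_map (Z_H1tot Dr Dpr phi gam tau dinv) (B_H1tot Dr phi gam tau)
           (Z_H0N Dr Dpr phi gam tau) (ImPhi Dr phi) R2
  \<and> wd_map (Z_H0N Dr Dpr phi gam tau) (ImPhi Dr phi)
           (M0 Dr phi) (B_H2M0 Dr phi gam tau dinv) (R3 Dr phi gam tau dinv)
  \<and> wd_map (M0 Dr phi) (B_H2M0 Dr phi gam tau dinv)
           (Z_H2tot Dr Dpr phi gam tau dinv) (B_H2tot Dr Dpr phi gam tau dinv) R4
  \<and> wd_map (Z_H2tot Dr Dpr phi gam tau dinv) (B_H2tot Dr Dpr phi gam tau dinv)
           (Z_H1N Dr Dpr phi gam tau dinv) (B_H1N Dr Dpr phi gam tau) R5
  \<and> inj_cls (Z_H1M0 Dr phi gam tau dinv) (B_H1M0 Dr phi gam tau) (B_H1tot Dr phi gam tau) R1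
  \<and> exact_at (Z_H1M0 Dr phi gam tau dinv) R1
           (Z_H1tot Dr Dpr phi gam tau dinv) (B_H1tot Dr phi gam tau) R2 (ImPhi Dr phi)
  \<and> exact_at (Z_H1tot Dr Dpr phi gam tau dinv) R2
           (Z_H0N Dr Dpr phi gam tau) (ImPhi Dr phi) (R3 Dr phi gam tau dinv)
           (B_H2M0 Dr phi gam tau dinv)
  \<and> exact_at (Z_H0N Dr Dpr phi gam tau) (R3 Dr phi gam tau dinv)
           (M0 Dr phi) (B_H2M0 Dr phi gam tau dinv) R4 (B_H2tot Dr Dpr phi gam tau dinv)
  \<and> exact_at (M0 Dr phi) R4
           (Z_H2tot Dr Dpr phi gam tau dinv) (B_H2tot Dr Dpr phi gam tau dinv) R5
           (B_H1N Dr Dpr phi gam tau)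
  \<and> surj_cls (Z_H2tot Dr Dpr phi gam tau dinv) (Z_H1N Dr Dpr phi gam tau dinv)
           (B_H1N Dr Dpr phi gam tau) R5"
  using wd1 wd2 wd3 wd4 wd5 inj1 ex1 ex2 ex3 ex4 surj5 by blast

end

theorem proposition4p1:
  fixes Dr Dpr :: "'m::ab_group_add set"
    and phi gam tau dlt dinv :: "'m \<Rightarrow> 'm"
  assumes Dr_grp: "subgrp Dr" and Dpr_grp: "subgrp Dpr" and incl: "Dr \<subseteq> Dpr"
    and gam_add: "\<forall>x\<in>Dpr. \<forall>y\<in>Dpr. gam (x + y) = gam x + gam y"
    and tau_add: "\<forall>x\<in>Dpr. \<forall>y\<in>Dpr. tau (x + y) = tau x + tau y"
    and dlt_add: "\<forall>x\<in>Dpr. \<forall>y\<in>Dpr. dlt (x + y) = dlt x + dlt y"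
    and dinv_add: "\<forall>x\<in>Dpr. \<forall>y\<in>Dpr. dinv (x + y) = dinv x + dinv y"
    and phi_add: "\<forall>x\<in>Dr. \<forall>y\<in>Dr. phi (x + y) = phi x + phi y"
    and gam_Dr: "gam ` Dr \<subseteq> Dr" and gam_Dpr: "gam ` Dpr \<subseteq> Dpr"
    and tau_Dr: "tau ` Dr \<subseteq> Dr" and tau_Dpr: "tau ` Dpr \<subseteq> Dpr"
    and dlt_Dr: "dlt ` Dr \<subseteq> Dr" and dlt_Dpr: "dlt ` Dpr \<subseteq> Dpr"
    and dinv_Dr: "dinv ` Dr \<subseteq> Dr" and dinv_Dpr: "dinv ` Dpr \<subseteq> Dpr"
    and phi_Dr: "phi ` Dr \<subseteq> Dpr"
    and dlt_inv: "\<forall>x\<in>Dpr. dinv (dlt x) = x \<and> dlt (dinv x) = x"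
    and gam_tau: "\<forall>x\<in>Dpr. gam (tau x - x) = dlt (tau (gam x) - gam x)"
    and phi_comm: "\<forall>x\<in>Dr. phi (gam x) = gam (phi x) \<and> phi (tau x) = tau (phi x)
                          \<and> phi (dlt x) = dlt (phi x)"
  shows
   "wd_map (Z_H1M0 Dr phi gam tau dinv) (B_H1M0 Dr phi gam tau)
           (Z_H1tot Dr Dpr phi gam tau dinv) (B_H1tot Dr phi gam tau) R1
  \<and> wd_map (Z_H1tot Dr Dpr phi gam tau dinv) (B_H1tot Dr phi gam tau)
           (Z_H0N Dr Dpr phi gam tau) (ImPhi Dr phi) R2
  \<and> wd_map (Z_H0N Dr Dpr phi gam tau) (ImPhi Dr phi)
           (M0 Dr phi) (B_H2M0 Dr phi gam tau dinv) (R3 Dr phi gam tau dinv)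
  \<and> wd_map (M0 Dr phi) (B_H2M0 Dr phi gam tau dinv)
           (Z_H2tot Dr Dpr phi gam tau dinv) (B_H2tot Dr Dpr phi gam tau dinv) R4
  \<and> wd_map (Z_H2tot Dr Dpr phi gam tau dinv) (B_H2tot Dr Dpr phi gam tau dinv)
           (Z_H1N Dr Dpr phi gam tau dinv) (B_H1N Dr Dpr phi gam tau) R5
  \<and> inj_cls (Z_H1M0 Dr phi gam tau dinv) (B_H1M0 Dr phi gam tau) (B_H1tot Dr phi gam tau) R1
  \<and> exact_at (Z_H1M0 Dr phi gam tau dinv) R1
           (Z_H1tot Dr Dpr phi gam tau dinv) (B_H1tot Dr phi gam tau) R2 (ImPhi Dr phi)
  \<and> exact_at (Z_H1tot Dr Dpr phi gam tau dinv) R2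
           (Z_H0N Dr Dpr phi gam tau) (ImPhi Dr phi) (R3 Dr phi gam tau dinv)
           (B_H2M0 Dr phi gam tau dinv)
  \<and> exact_at (Z_H0N Dr Dpr phi gam tau) (R3 Dr phi gam tau dinv)
           (M0 Dr phi) (B_H2M0 Dr phi gam tau dinv) R4 (B_H2tot Dr Dpr phi gam tau dinv)
  \<and> exact_at (M0 Dr phi) R4
           (Z_H2tot Dr Dpr phi gam tau dinv) (B_H2tot Dr Dpr phi gam tau dinv) R5
           (B_H1N Dr Dpr phi gam tau)
  \<and> surj_cls (Z_H2tot Dr Dpr phi gam tau dinv) (Z_H1N Dr Dpr phi gam tau dinv)
           (B_H1N Dr Dpr phi gam tau) R5"
  proof -
  interpret P41 Dr Dpr phi gam tau dlt dinv by (intro P41.intro) (rule assms)+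
  show ?thesis by (rule main)
qed

end
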